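(* Given that the cardinality of $\mathcal{F}_{\lambda}$ is $\ell$, the expected length of the chosen largest gap (CLG) on wavelength $\lambda$ is bounded by \[ \Lambda\cdot g\left(\ell,\eta-1\right)\leq \mathbb{E}^{\ell}\left(\left|CLG_{\lambda}\right|\right)\leq \Lambda\cdot g\left(\ell,\eta+1\right), \] where $g\left(l,N\right)$ denotes the expected length of the CLG for a single wavelength ring with $N$ nodes, when the active set is chosen uniformly at random from all subsets of $\left\{ 1,\ldots,N\right\}$ with cardinality $\left(l+1\right)$.
   Context: Consider a bidirectional WDM packet ring with $N$ nodes $1,\ldots,N$ (indexed clockwise, modulo $N$) and $\Lambda$ wavelengths in each direction, with $\eta:=N/\Lambda$ an integer. Each node receives on one wavelength: the nodes $\mathcal{M}_{\lambda}:=\{\lambda+k\Lambda : k=0,\ldots,\eta-1\}$ share drop wavelength $\lambda$. A packet has a sender $S$ and a random fanout (destination) set $\mathcal{F}\subset\{1,\ldots,N\}\setminus\{S\}$; for a given wavelength $\lambda$, $\mathcal{F}_{\lambda}:=\mathcal{F}\cap\mathcal{M}_{\lambda}$ is the set of destinations with drop wavelength $\lambda$, and $\mathcal{A}_{\lambda}:=\mathcal{F}_{\lambda}\cup\{S\}$ is the set of active nodes on $\lambda$. Ordering the active nodes as $X_{\lambda,1}<\cdots<X_{\lambda,\ell+1}$, the gaps are $X_{\lambda,1}+(N-X_{\lambda,\ell+1}),\,X_{\lambda,2}-X_{\lambda,1},\ldots,X_{\lambda,\ell+1}-X_{\lambda,\ell}$; the chosen largest gap $CLG_{\lambda}$ is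 a largest of these gaps (ties broken uniformly at random), which under shortest path routing is the portion of the ring not traversed. The destinations on $\lambda$ are (conditionally on their number) uniformly distributed among the admissible nodes of $\mathcal{M}_{\lambda}$, and $\mathbb{E}^{\ell}$ denotes expectation conditioned on $|\mathcal{F}_{\lambda}|=\ell$. *)

theory Defs
  imports Complex_Main
begin

definition gaps :: "nat \<Rightarrow> nat set \<Rightarrow> nat list" where
  "gaps N A = (let xs = sorted_list_of_set A in
     (hd xs + (N - last xs)) # map (\<lambda>i. xs ! Suc i - xs ! i) [0..<length xs - 1])"

text \<open>Length of the chosen largest gap (a largest gap; tie-breaking does not affect the length).\<close>
definition clg_length :: "nat \<Rightarrow> nat set \<Rightarrow> nat" where
  "clg_length N A = Max (set (gaps N A))"

definition uniform_avg :: "'a set \<Rightarrow> ('a \<Rightarrow> real) \<Rightarrow> real" where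
  "uniform_avg X f = (\<Sum>x\<in>X. f x) / real (card X)"

definition g :: "nat \<Rightarrow> nat \<Rightarrow> real" where
  "g l N = uniform_avg {A. A \<subseteq> {1..N} \<and> card A = l + 1} (\<lambda>A. real (clg_length N A))"

definition drop_set :: "nat \<Rightarrow> nat \<Rightarrow> nat \<Rightarrow> nat set" where
  "drop_set Lam eta lam = {lam + k * Lam | k. k < eta}"

text \<open>E^l(|CLG_lam|): destinations F_lam uniform among the l-subsets of the admissible nodes
  M_lam - {S}; active set F_lam \<union> {S}.\<close>
definition cond_exp_clg :: "nat \<Rightarrow> nat \<Rightarrow> nat \<Rightarrow> nat \<Rightarrow> nat \<Rightarrow> real" where
  "cond_exp_clg Lam eta lam S l =
     uniform_avg {F. F \<subseteq> drop_set Lam eta lam - {S} \<and> card F = l}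
       (\<lambda>F. real (clg_length (eta * Lam) (insert S F)))"

end

theory Submission
  imports Defs
begin


fun dl :: "nat list \<Rightarrow> nat list" where
  "dl (x # y # zs) = (y - x) # dl (y # zs)"
| "dl _ = []"

lemma dl_idx: "map (\<lambda>i. xs ! Suc i - xs ! i) [0..<length xs - 1] = dl xs"
proof (induction xs rule: dl.induct)
  case (1 x y zs)
  have "[0..<length (x # y # zs) - 1] = [0..<Suc (length zs)]" by simp
  then show ?case using 1 by (simp only: map_upt_Suc) simp
qed auto

lemma sls: "sorted_wrt (<) xs \<Longrightarrow> sorted_list_of_set (set xs) = xs"
  by (simp add: sorted_list_of_set_sort_remdups strict_sorted_iff distinct_remdups_id sorted_sort_id)

lemma sls_sorted: "finite A \<Longrightarrow> sorted_wrt (<) (sorted_list_of_set A) \<and> set (sorted_list_of_set A) = A"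
  by simp

definition cgaps :: "nat set \<Rightarrow> nat set" where
  "cgaps T = {y - x | x y. x \<in> T \<and> y \<in> T \<and> x < y \<and> (\<forall>z\<in>T. \<not> (x < z \<and> z < y))}"

definition lgap :: "nat set \<Rightarrow> nat" where "lgap T = Max (cgaps T)"

lemma cgaps_finite: "finite T \<Longrightarrow> finite (cgaps T)"
proof -
  assume "finite T"
  have "cgaps T \<subseteq> (\<lambda>(x,y). y - x) ` (T \<times> T)" unfolding cgaps_def by auto
  thus ?thesis using \<open>finite T\<close> finite_subset by blast
qed

lemma consec_exists:
  fixes T :: "nat set"
  assumes "finite T" "x \<in> T" "y \<in> T" "x < y"
  shows "\<exists>b\<in>T. x < b \<and> b \<le> y \<and> (\<forall>z\<in>T. \<not> (x < z \<and> z < b))"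
proof -
  let ?B = "{z\<in>T. x < z}"
  have fin: "finite ?B" "?B \<noteq> {}" using assms by auto
  let ?b = "Min ?B"
  have "?b \<in> ?B" using Min_in[OF fin] .
  moreover have "?b \<le> y" using assms fin by (intro Min_le) auto
  moreover have "\<forall>z\<in>T. \<not> (x < z \<and> z < ?b)" using fin Min_le by fastforce
  ultimately show ?thesis by blast
qed

lemma cgaps_ne: "finite T \<Longrightarrow> x \<in> T \<Longrightarrow> y \<in> T \<Longrightarrow> x < y \<Longrightarrow> cgaps T \<noteq> {}"
  using consec_exists[of T x y] unfolding cgaps_def by blast

lemma lgap_ge: "finite T \<Longrightarrow> x \<in> T \<Longrightarrow> y \<in> T \<Longrightarrow> x < y \<Longrightarrow> (\<forall>z\<in>T. \<not> (x < z \<and> z < y)) \<Longrightarrow> y - x \<le> lgap T"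
  unfolding lgap_def by (rule Max_ge) (use cgaps_finite in blast, unfold cgaps_def, blast)

lemma lgap_in: "finite T \<Longrightarrow> x \<in> T \<Longrightarrow> y \<in> T \<Longrightarrow> x < y \<Longrightarrow>
   \<exists>a\<in>T. \<exists>b\<in>T. a < b \<and> (\<forall>z\<in>T. \<not> (a < z \<and> z < b)) \<and> lgap T = b - a"
proof -
  assume a: "finite T" "x \<in> T" "y \<in> T" "x < y"
  have "lgap T \<in> cgaps T" unfolding lgap_def using cgaps_ne[OF a] cgaps_finite[OF a(1)] by (rule Max_in[rotated])
  thus ?thesis unfolding cgaps_def by blast
qed

lemma lgap_mono_le:
  fixes T :: "nat set" and \<sigma> :: "nat \<Rightarrow> nat" and c :: nat
  assumes fin: "finite T" and two: "x0 \<in> T" "y0 \<in> T" "x0 < y0"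
    and H: "\<And>x y. x \<in> T \<Longrightarrow> y \<in> T \<Longrightarrow> x < y \<Longrightarrow> \<sigma> x < \<sigma> y \<and> y - x \<le> c * (\<sigma> y - \<sigma> x)"
  shows "lgap T \<le> c * lgap (\<sigma> ` T)"
proof -
  obtain a b where ab: "a \<in> T" "b \<in> T" "a < b" "\<forall>z\<in>T. \<not> (a < z \<and> z < b)" "lgap T = b - a"
    using lgap_in[OF fin two] by blast
  have mono: "\<And>x y. x \<in> T \<Longrightarrow> y \<in> T \<Longrightarrow> x \<le> y \<Longrightarrow> \<sigma> x \<le> \<sigma> y"
    using H by (metis le_neq_implies_less less_imp_le order_refl)
  have "\<forall>w\<in>\<sigma> ` T. \<not> (\<sigma> a < w \<and> w < \<sigma> b)"
  proof
    fix w assume "w \<in> \<sigma> ` T"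
    then obtain z where z: "z \<in> T" "w = \<sigma> z" by blast
    show "\<not> (\<sigma> a < w \<and> w < \<sigma> b)"
    proof (cases "z \<le> a")
      case True thus ?thesis using mono[OF z(1) ab(1)] z by auto
    next
      case False
      hence "b \<le> z" using ab(4) z(1) by auto
      thus ?thesis using mono[OF ab(2) z(1)] z by auto
    qed
  qed
  hence "\<sigma> b - \<sigma> a \<le> lgap (\<sigma> ` T)"
    using ab H[OF ab(1,2,3)] fin by (intro lgap_ge) auto
  hence "c * (\<sigma> b - \<sigma> a) \<le> c * lgap (\<sigma> ` T)" by simp
  thus ?thesis using H[OF ab(1,2,3)] ab(5) by linarith
qed

lemma lgap_mono_ge:
  fixes T :: "nat set" and \<sigma> :: "nat \<Rightarrow> nat" and c :: nat
  assumes fin: "finite T" and two: "p0 \<in> \<sigma> ` T" "q0 \<in> \<sigma> ` T" "p0 < q0"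
    and mono: "\<And>x y. x \<in> T \<Longrightarrow> y \<in> T \<Longrightarrow> x \<le> y \<Longrightarrow> \<sigma> x \<le> \<sigma> y"
    and H: "\<And>x y. x \<in> T \<Longrightarrow> y \<in> T \<Longrightarrow> x < y \<Longrightarrow> c * (\<sigma> y - \<sigma> x) \<le> y - x"
  shows "c * lgap (\<sigma> ` T) \<le> lgap T"
proof -
  have fin2: "finite (\<sigma> ` T)" using fin by simp
  obtain p q where pq: "p \<in> \<sigma> ` T" "q \<in> \<sigma> ` T" "p < q" "\<forall>z\<in>\<sigma> ` T. \<not> (p < z \<and> z < q)" "lgap (\<sigma> ` T) = q - p"
    using lgap_in[OF fin2 two] by blast
  let ?P = "{t\<in>T. \<sigma> t = p}" and ?Q = "{t\<in>T. \<sigma> t = q}"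
  have fP: "finite ?P" "?P \<noteq> {}" and fQ: "finite ?Q" "?Q \<noteq> {}" using fin pq by auto
  define a where "a = Max ?P"
  define b where "b = Min ?Q"
  have a: "a \<in> T" "\<sigma> a = p" using Max_in[OF fP] a_def by auto
  have b: "b \<in> T" "\<sigma> b = q" using Min_in[OF fQ] b_def by auto
  have amax: "\<And>t. t \<in> T \<Longrightarrow> \<sigma> t = p \<Longrightarrow> t \<le> a" unfolding a_def using fP by (intro Max_ge) auto
  have bmin: "\<And>t. t \<in> T \<Longrightarrow> \<sigma> t = q \<Longrightarrow> b \<le> t" unfolding b_def using fQ by (intro Min_le) auto
  have ab: "a < b"
  proof (rule ccontr)
    assume "\<not> a < b" hence "b \<le> a" by simp
    from mono[OF b(1) a(1) this] a b pq(3) show False by simp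
  qed
  have "\<forall>z\<in>T. \<not> (a < z \<and> z < b)"
  proof (intro ballI notI)
    fix z assume z: "z \<in> T" "a < z \<and> z < b"
    have "p \<le> \<sigma> z" using mono[OF a(1) z(1)] z a by simp
    moreover have "\<sigma> z \<le> q" using mono[OF z(1) b(1)] z b by simp
    moreover have "\<sigma> z \<noteq> p" using amax[OF z(1)] z by force
    moreover have "\<sigma> z \<noteq> q" using bmin[OF z(1)] z by force
    ultimately show False using pq(4) z(1) by force
  qed
  hence "b - a \<le> lgap T" using lgap_ge[OF fin a(1) b(1) ab] by blast
  thus ?thesis using H[OF a(1) b(1) ab] a b pq(5) by simp
qed

lemma lgap_anti:
  fixes T T' :: "nat set"
  assumes fin: "finite T'" and sub: "T \<subseteq> T'" and two: "x0 \<in> T" "y0 \<in> T" "x0 < y0"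
    and bnd: "\<And>z. z \<in> T' \<Longrightarrow> \<exists>a\<in>T. \<exists>b\<in>T. a \<le> z \<and> z \<le> b"
  shows "lgap T' \<le> lgap T"
proof -
  have finT: "finite T" using fin sub finite_subset by blast
  obtain x y where xy: "x \<in> T'" "y \<in> T'" "x < y" "\<forall>z\<in>T'. \<not> (x < z \<and> z < y)" "lgap T' = y - x"
    using lgap_in[OF fin, of x0 y0] two sub by blast
  let ?A = "{t\<in>T. t \<le> x}" and ?B = "{t\<in>T. y \<le> t}"
  have fA: "finite ?A" "?A \<noteq> {}" using finT bnd[OF xy(1)] by auto
  have fB: "finite ?B" "?B \<noteq> {}" using finT bnd[OF xy(2)] by auto
  define a where "a = Max ?A"
  define b where "b = Min ?B"
  have a: "a \<in> T" "a \<le> x" using Max_in[OF fA] a_def by auto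
  have b: "b \<in> T" "y \<le> b" using Min_in[OF fB] b_def by auto
  have amax: "\<And>t. t \<in> T \<Longrightarrow> t \<le> x \<Longrightarrow> t \<le> a" unfolding a_def using fA by (intro Max_ge) auto
  have bmin: "\<And>t. t \<in> T \<Longrightarrow> y \<le> t \<Longrightarrow> b \<le> t" unfolding b_def using fB by (intro Min_le) auto
  have ab: "a < b" using a b xy by simp
  have "\<forall>z\<in>T. \<not> (a < z \<and> z < b)"
  proof (intro ballI notI)
    fix z assume z: "z \<in> T" "a < z \<and> z < b"
    have "\<not> z \<le> x" using amax[OF z(1)] z by force
    moreover have "\<not> y \<le> z" using bmin[OF z(1)] z by force
    ultimately show False using xy(4) z(1) sub by force
  qed
  hence "b - a \<le> lgap T" using lgap_ge[OF finT a(1) b(1) ab] by blast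
  thus ?thesis using a b xy by simp
qed

lemma sw_last: "sorted_wrt (<) xs \<Longrightarrow> x \<in> set xs \<Longrightarrow> (x::nat) \<le> last xs"
proof (induction xs)
  case (Cons a xs) thus ?case by (cases xs) (auto, metis last_in_set less_imp_le list.distinct(1) list.set_intros(1))
qed simp

lemma sw_hd: "sorted_wrt (<) xs \<Longrightarrow> x \<in> set xs \<Longrightarrow> hd xs \<le> (x::nat)"
  by (cases xs) auto

lemma cgaps_insert_min:
  fixes S :: "nat set"
  assumes "finite S" "y \<in> S" "\<forall>z\<in>S. y \<le> z" "x < y"
  shows "cgaps (insert x S) = insert (y - x) (cgaps S)"
proof
  show "cgaps (insert x S) \<subseteq> insert (y - x) (cgaps S)"
  proof
    fix d assume "d \<in> cgaps (insert x S)"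
    then obtain a b where ab: "a \<in> insert x S" "b \<in> insert x S" "a < b" "\<forall>z\<in>insert x S. \<not> (a < z \<and> z < b)" "d = b - a"
      unfolding cgaps_def by blast
    show "d \<in> insert (y - x) (cgaps S)"
    proof (cases "a = x")
      case True
      have "b \<in> S" using ab assms True by auto
      hence "y \<le> b" using assms by auto
      moreover have "\<not> (b > y)" using ab(4) True assms by auto
      ultimately show ?thesis using True ab by simp
    next
      case False
      hence "a \<in> S" "b \<in> S" using ab assms by auto
      hence "d \<in> cgaps S" using ab unfolding cgaps_def by blast
      thus ?thesis by simp
    qed
  qed
next
  show "insert (y - x) (cgaps S) \<subseteq> cgaps (insert x S)"
  proof
    fix d assume "d \<in> insert (y - x) (cgaps S)"
    thus "d \<in> cgaps (insert x S)"
    proof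
      assume "d = y - x"
      moreover have "\<forall>z\<in>insert x S. \<not> (x < z \<and> z < y)" using assms by force
      ultimately show ?thesis unfolding cgaps_def using assms by blast
    next
      assume "d \<in> cgaps S"
      then obtain a b where ab: "a \<in> S" "b \<in> S" "a < b" "\<forall>z\<in>S. \<not> (a < z \<and> z < b)" "d = b - a"
        unfolding cgaps_def by blast
      have "x < a" using assms ab by force
      hence "\<forall>z\<in>insert x S. \<not> (a < z \<and> z < b)" using ab by auto
      thus ?thesis unfolding cgaps_def using ab by blast
    qed
  qed
qed

lemma dl_cgaps: "sorted_wrt (<) ys \<Longrightarrow> set (dl ys) = cgaps (set ys)"
proof (induction ys rule: dl.induct)
  case (1 x y zs)
  have "set (x # y # zs) = insert x (set (y # zs))" by simp
  moreover have "cgaps (insert x (set (y # zs))) = insert (y - x) (cgaps (set (y # zs)))"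
    using 1(2) by (intro cgaps_insert_min) auto
  ultimately show ?case using 1 by simp
next
  case ("2_1") thus ?case by (simp add: cgaps_def)
next
  case ("2_2" v) thus ?case by (simp add: cgaps_def)
qed

lemma clg_pointed:
  assumes "n \<ge> 1" "J \<subseteq> {1..<n}"
  shows "clg_length n (insert n J) = lgap (insert 0 (insert n J))"
proof -
  have fin: "finite (insert n J)" using assms finite_subset by auto
  define xs where "xs = sorted_list_of_set (insert n J)"
  have sw: "sorted_wrt (<) xs" unfolding xs_def by (rule strict_sorted_list_of_set)
  have st: "set xs = insert n J" unfolding xs_def using fin by (rule set_sorted_list_of_set)
  have ne: "xs \<noteq> []" using st by auto
  have "last xs \<in> insert n J" using st ne last_in_set by metis
  hence "last xs \<le> n" using assms by auto
  moreover have "n \<le> last xs" using sw_last[OF sw] st by auto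
  ultimately have lst: "last xs = n" by simp
  have h1: "hd xs \<ge> 1" using st ne hd_in_set[OF ne] assms by force
  have sw0: "sorted_wrt (<) (0 # xs)" using sw st assms by auto
  have "gaps n (insert n J) = hd xs # dl xs"
    unfolding gaps_def Let_def xs_def[symmetric] dl_idx lst by simp
  moreover have "dl (0 # xs) = hd xs # dl xs" using ne by (cases xs) auto
  ultimately have "set (gaps n (insert n J)) = set (dl (0 # xs))" by simp
  also have "\<dots> = cgaps (insert 0 (insert n J))" using dl_cgaps[OF sw0] st by simp
  finally show ?thesis unfolding clg_length_def lgap_def by simp
qed

definition rot :: "nat \<Rightarrow> nat \<Rightarrow> nat" where "rot n x = (if x < n then Suc x else 1)"

lemma dl_map_Suc: "dl (map Suc xs) = dl xs"
  by (induction xs rule: dl.induct) auto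

lemma dl_snoc: "ys \<noteq> [] \<Longrightarrow> dl (ys @ [z]) = dl ys @ [z - last ys]"
  by (induction ys rule: dl.induct) auto

lemma gaps_list: "sorted_wrt (<) xs \<Longrightarrow> gaps n (set xs) = (hd xs + (n - last xs)) # dl xs"
  using dl_idx[of xs] by (simp add: gaps_def sls)

lemma clg_rot:
  assumes n: "n \<ge> 1" and A: "A \<subseteq> {1..n}"
  shows "clg_length n (rot n ` A) = clg_length n A"
proof -
  have fin: "finite A" using A finite_subset by auto
  show ?thesis
  proof (cases "n \<in> A")
    case False
    define xs where "xs = sorted_list_of_set A"
    have sw: "sorted_wrt (<) xs" unfolding xs_def by (rule strict_sorted_list_of_set)
    have st: "set xs = A" unfolding xs_def using fin by (rule set_sorted_list_of_set)
    show ?thesis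
    proof (cases "A = {}")
      case True thus ?thesis by simp
    next
      case ne: False
      hence xne: "xs \<noteq> []" using st by auto
      have lt: "\<forall>a\<in>A. a < n" using A False by (metis atLeastAtMost_iff le_neq_implies_less subsetD)
      have "rot n ` A = set (map Suc xs)" using lt st unfolding rot_def by auto
      moreover have sw2: "sorted_wrt (<) (map Suc xs)" using sw by (simp add: sorted_wrt_map)
      moreover have "last xs < n" using lt st xne last_in_set by metis
      ultimately have "gaps n (rot n ` A) = gaps n A"
        using gaps_list[OF sw2] gaps_list[OF sw] st xne by (simp add: dl_map_Suc hd_map last_map)
      thus ?thesis unfolding clg_length_def by simp
    qed
  next
    case True
    define A' where "A' = A - {n}"
    show ?thesis
    proof (cases "A' = {}")
      case True
      hence "A = {n}" using \<open>n \<in> A\<close> A'_def by auto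
      moreover have "rot n ` {n} = {1}" by (simp add: rot_def)
      ultimately show ?thesis using n by (simp add: clg_length_def gaps_def)
    next
      case ne: False
      have fin': "finite A'" using fin A'_def by simp
      define ys where "ys = sorted_list_of_set A'"
      have sw: "sorted_wrt (<) ys" unfolding ys_def by (rule strict_sorted_list_of_set)
      have st: "set ys = A'" unfolding ys_def using fin' by (rule set_sorted_list_of_set)
      have yne: "ys \<noteq> []" using st ne by auto
      have lt: "\<forall>a\<in>A'. a < n \<and> 1 \<le> a" using A A'_def by force
      have sw1: "sorted_wrt (<) (ys @ [n])" using sw lt st by (simp add: sorted_wrt_append)
      have sA: "set (ys @ [n]) = A" using st A'_def True by auto
      have "rot n ` A = set (1 # map Suc ys)" using lt st True A'_def unfolding rot_def by auto
      moreover have sw2: "sorted_wrt (<) (1 # map Suc ys)" using sw lt st by (auto simp add: sorted_wrt_map)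
      moreover have "last ys < n" using lt st yne last_in_set by metis
      moreover have "dl (1 # map Suc ys) = hd ys # dl ys" using yne by (cases ys) (auto simp: dl_map_Suc[of "_ # _", simplified])
      ultimately have "set (gaps n (rot n ` A)) = set (gaps n A)"
        using gaps_list[OF sw2] gaps_list[OF sw1] sA yne by (auto simp add: dl_snoc last_map)
      thus ?thesis unfolding clg_length_def by simp
    qed
  qed
qed

lemma bij_restrict:
  assumes "bij_betw h S T" "\<And>s. s \<in> S \<Longrightarrow> P s = Q (h s)"
  shows "bij_betw h {s\<in>S. P s} {t\<in>T. Q t}"
proof -
  have "inj_on h {s\<in>S. P s}" using assms(1) unfolding bij_betw_def by (rule inj_on_subset[OF conjunct1]) auto
  moreover have "h ` {s\<in>S. P s} = {t\<in>T. Q t}"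
  proof
    show "h ` {s\<in>S. P s} \<subseteq> {t\<in>T. Q t}" using assms bij_betwE by fastforce
    show "{t\<in>T. Q t} \<subseteq> h ` {s\<in>S. P s}"
    proof
      fix t assume t: "t \<in> {t\<in>T. Q t}"
      then obtain s where "s \<in> S" "t = h s" using assms(1) unfolding bij_betw_def by blast
      thus "t \<in> h ` {s\<in>S. P s}" using assms(2) t by auto
    qed
  qed
  ultimately show ?thesis unfolding bij_betw_def by blast
qed

lemma rot_bij: "n \<ge> 1 \<Longrightarrow> bij_betw (rot n) {1..n} {1..n}"
proof -
  assume n: "n \<ge> 1"
  have "inj_on (rot n) {1..n}" unfolding inj_on_def rot_def by auto
  moreover have "rot n ` {1..n} \<subseteq> {1..n}" unfolding rot_def using n by auto
  ultimately show ?thesis by (simp add: bij_betw_def endo_inj_surj)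
qed

lemma rotk_bij: "n \<ge> 1 \<Longrightarrow> bij_betw (rot n ^^ k) {1..n} {1..n}"
proof (induction k)
  case (Suc k) show ?case unfolding funpow.simps(2) by (rule bij_betw_trans[OF Suc.IH[OF Suc.prems] rot_bij[OF Suc.prems]])
qed (simp add: bij_betw_id)

lemma clg_rotk: "n \<ge> 1 \<Longrightarrow> A \<subseteq> {1..n} \<Longrightarrow> clg_length n ((rot n ^^ k) ` A) = clg_length n A"
proof (induction k arbitrary: A)
  case (Suc k)
  have "(rot n ^^ Suc k) ` A = rot n ` ((rot n ^^ k) ` A)" by (simp add: image_comp)
  moreover have "(rot n ^^ k) ` A \<subseteq> {1..n}" using rotk_bij[OF Suc(2), of k] Suc(3) bij_betwE by blast
  ultimately show ?case using clg_rot[OF Suc(2)] Suc by simp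
qed simp

lemma rotk_add: "x + k \<le> n \<Longrightarrow> (rot n ^^ k) x = x + k"
  by (induction k) (auto simp: rot_def)

lemma g_pointed:
  assumes n: "n \<ge> 1"
  shows "g l n = uniform_avg {J. J \<subseteq> {1..<n} \<and> card J = l} (\<lambda>J. real (lgap (insert 0 (insert n J))))"
proof -
  define X where "X = {A. A \<subseteq> {1..n} \<and> card A = l + 1}"
  define Y where "Y = (\<lambda>a. {A\<in>X. a \<in> A})"
  define f where "f = (\<lambda>A. real (clg_length n A))"
  have finX: "finite X" unfolding X_def by (rule finite_subset[of _ "Pow {1..n}"]) auto
  have Yeq: "sum f (Y a) = sum f (Y n) \<and> card (Y a) = card (Y n)" if a: "a \<in> {1..n}" for a
  proof -
    define h where "h = image (rot n ^^ (n - a))"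
    have hb: "bij_betw (rot n ^^ (n - a)) {1..n} {1..n}" using rotk_bij[OF n] .
    have ha: "(rot n ^^ (n - a)) a = n" using a by (subst rotk_add) auto
    have bp: "bij_betw h (Pow {1..n}) (Pow {1..n})" unfolding h_def by (rule bij_betw_image_Pow[OF hb])
    have eq: "(card A = l + 1 \<and> a \<in> A) = (card (h A) = l + 1 \<and> n \<in> h A)" if "A \<in> Pow {1..n}" for A
    proof -
      have inj: "inj_on (rot n ^^ (n - a)) {1..n}" using hb bij_betw_def by blast
      have "card (h A) = card A" unfolding h_def using that inj_on_subset[OF inj] by (intro card_image) auto
      moreover have "(n \<in> h A) = (a \<in> A)" unfolding h_def using that a inj ha
        by (metis (no_types, lifting) PowD inj_on_image_mem_iff)
      ultimately show ?thesis by simp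
    qed
    have "bij_betw h {A\<in>Pow {1..n}. card A = l + 1 \<and> a \<in> A} {B\<in>Pow {1..n}. card B = l + 1 \<and> n \<in> B}"
      using bij_restrict[OF bp, where P="\<lambda>A. card A = l + 1 \<and> a \<in> A" and Q="\<lambda>B. card B = l + 1 \<and> n \<in> B"] eq by blast
    moreover have "{A\<in>Pow {1..n}. card A = l + 1 \<and> a \<in> A} = Y a" "{B\<in>Pow {1..n}. card B = l + 1 \<and> n \<in> B} = Y n"
      unfolding Y_def X_def by auto
    ultimately have bY: "bij_betw h (Y a) (Y n)" by simp
    have "sum f (Y n) = sum (\<lambda>A. f (h A)) (Y a)" using sum.reindex_bij_betw[OF bY, of f] by simp
    also have "\<dots> = sum f (Y a)"
    proof (rule sum.cong[OF refl])
      fix A assume "A \<in> Y a"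
      hence "A \<subseteq> {1..n}" unfolding Y_def X_def by auto
      thus "f (h A) = f A" unfolding f_def h_def using clg_rotk[OF n] by simp
    qed
    finally show ?thesis using bij_betw_same_card[OF bY] by simp
  qed
  have swp: "(\<Sum>A\<in>X. real (card A) * F A) = real n * sum F (Y n)"
    if hF: "\<And>a. a \<in> {1..n} \<Longrightarrow> sum F (Y a) = sum F (Y n)" for F :: "nat set \<Rightarrow> real"
  proof -
    have "(\<Sum>A\<in>X. real (card A) * F A) = (\<Sum>A\<in>X. \<Sum>a\<in>{a. a \<in> {1..n} \<and> a \<in> A}. F A)"
    proof (rule sum.cong[OF refl])
      fix A assume "A \<in> X"
      hence "{a. a \<in> {1..n} \<and> a \<in> A} = A" unfolding X_def by auto
      thus "real (card A) * F A = (\<Sum>a\<in>{a. a \<in> {1..n} \<and> a \<in> A}. F A)" by simp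
    qed
    also have "\<dots> = (\<Sum>a\<in>{1..n}. \<Sum>A\<in>{A. A \<in> X \<and> a \<in> A}. F A)"
      by (rule sum.swap_restrict[OF finX]) simp
    also have "\<dots> = (\<Sum>a\<in>{1..n}. sum F (Y n))"
    proof (rule sum.cong[OF refl])
      fix a assume a: "a \<in> {1..n}"
      show "(\<Sum>A\<in>{A. A \<in> X \<and> a \<in> A}. F A) = sum F (Y n)" using hF[OF a] unfolding Y_def by simp
    qed
    finally show ?thesis by simp
  qed
  have cX: "\<And>A. A \<in> X \<Longrightarrow> real (card A) = real l + 1" unfolding X_def by auto
  have e1: "(\<Sum>A\<in>X. real (card A) * f A) = real n * sum f (Y n)"
  proof (rule swp)
    fix a assume "a \<in> {1..n}"
    thus "sum f (Y a) = sum f (Y n)" using Yeq by blast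
  qed
  have e2: "(\<Sum>A\<in>X. real (card A) * 1) = real n * sum (\<lambda>_. 1) (Y n)"
  proof (rule swp)
    fix a assume "a \<in> {1..n}"
    hence "card (Y a) = card (Y n)" using Yeq by blast
    thus "(\<Sum>A\<in>Y a. 1::real) = (\<Sum>A\<in>Y n. 1)" by simp
  qed
  have s1: "(real l + 1) * sum f X = real n * sum f (Y n)"
  proof -
    have "(real l + 1) * sum f X = (\<Sum>A\<in>X. real (card A) * f A)"
      unfolding sum_distrib_left by (rule sum.cong) (use cX in auto)
    thus ?thesis using e1 by simp
  qed
  have s2: "(real l + 1) * real (card X) = real n * real (card (Y n))"
    using e2 cX by (simp add: mult.commute)
  have avg: "g l n = sum f (Y n) / real (card (Y n))"
  proof -
    have "g l n = sum f X / real (card X)" unfolding g_def uniform_avg_def X_def f_def by simp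
    also have "\<dots> = ((real l + 1) * sum f X) / ((real l + 1) * real (card X))" by simp
    also have "\<dots> = sum f (Y n) / real (card (Y n))" unfolding s1 s2 using n by simp
    finally show ?thesis .
  qed
  define JS where "JS = {J. J \<subseteq> {1..<n} \<and> card J = l}"
  have bJ: "bij_betw (insert n) JS (Y n)"
  proof (rule bij_betw_byWitness[where f' = "\<lambda>A. A - {n}"])
    show "\<forall>a\<in>JS. insert n a - {n} = a" unfolding JS_def by auto
    show "\<forall>a'\<in>Y n. insert n (a' - {n}) = a'" unfolding Y_def by auto
    show "insert n ` JS \<subseteq> Y n"
    proof
      fix A assume "A \<in> insert n ` JS"
      then obtain J where J: "J \<in> JS" "A = insert n J" by blast
      have "finite J" "n \<notin> J" using J unfolding JS_def by (auto intro: finite_subset)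
      thus "A \<in> Y n" using J n unfolding JS_def Y_def X_def by auto
    qed
    show "(\<lambda>A. A - {n}) ` Y n \<subseteq> JS"
    proof
      fix J assume "J \<in> (\<lambda>A. A - {n}) ` Y n"
      then obtain A where A: "A \<in> Y n" "J = A - {n}" by blast
      have "finite A" using A unfolding Y_def X_def by (auto intro: finite_subset)
      thus "J \<in> JS" using A unfolding JS_def Y_def X_def by auto
    qed
  qed
  have "sum f (Y n) = (\<Sum>J\<in>JS. f (insert n J))" using sum.reindex_bij_betw[OF bJ, of f] by simp
  also have "\<dots> = (\<Sum>J\<in>JS. real (lgap (insert 0 (insert n J))))"
    unfolding f_def JS_def by (rule sum.cong) (use clg_pointed[OF n] in auto)
  finally show ?thesis using avg bij_betw_same_card[OF bJ] unfolding uniform_avg_def JS_def by simp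
qed

definition SS :: "nat set \<Rightarrow> nat \<Rightarrow> nat set set" where
  "SS W l = {K. K \<subseteq> W \<and> card K = l}"

lemma SS_finite: "finite W \<Longrightarrow> finite (SS W l)"
  unfolding SS_def by (rule finite_subset[of _ "Pow W"]) auto

lemma pair_sum:
  fixes F :: "nat set \<Rightarrow> real"
  assumes W: "finite W"
  shows "(\<Sum>K\<in>SS W (Suc l). \<Sum>x\<in>K. F (K - {x})) = (\<Sum>K\<in>SS W l. real (card (W - K)) * F K)"
proof -
  have fin1: "\<And>K. K \<in> SS W (Suc l) \<Longrightarrow> finite K" unfolding SS_def using W finite_subset by blast
  have "(\<Sum>K\<in>SS W (Suc l). \<Sum>x\<in>K. F (K - {x})) = (\<Sum>(K,x)\<in>Sigma (SS W (Suc l)) (\<lambda>K. K). F (K - {x}))"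
    by (rule sum.Sigma) (auto simp: SS_finite[OF W] fin1)
  also have "\<dots> = (\<Sum>(K,y)\<in>Sigma (SS W l) (\<lambda>K. W - K). F K)"
  proof (rule sum.reindex_bij_witness[where i = "\<lambda>(K,y). (insert y K, y)" and j = "\<lambda>(K,x). (K - {x}, x)"])
    fix p assume p: "p \<in> Sigma (SS W l) (\<lambda>K. W - K)"
    then obtain K y where [simp]: "p = (K,y)" and K: "K \<subseteq> W" "card K = l" "y \<in> W" "y \<notin> K" unfolding SS_def by auto
    have "finite K" using K W finite_subset by blast
    thus "(\<lambda>(K, x). (K - {x}, x)) ((\<lambda>(K, y). (insert y K, y)) p) = p" using K by auto
    show "(\<lambda>(K, y). (insert y K, y)) p \<in> Sigma (SS W (Suc l)) (\<lambda>K. K)" using K \<open>finite K\<close> unfolding SS_def by auto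
  next
    fix p assume p: "p \<in> Sigma (SS W (Suc l)) (\<lambda>K. K)"
    then obtain K x where [simp]: "p = (K,x)" and K: "K \<subseteq> W" "card K = Suc l" "x \<in> K" unfolding SS_def by auto
    have "finite K" using K W finite_subset by blast
    thus "(\<lambda>(K, y). (insert y K, y)) ((\<lambda>(K, x). (K - {x}, x)) p) = p" using K by auto
    show "(\<lambda>(K, x). (K - {x}, x)) p \<in> Sigma (SS W l) (\<lambda>K. W - K)" using K \<open>finite K\<close> unfolding SS_def by auto
    show "(case (\<lambda>(K, x). (K - {x}, x)) p of (K, y) \<Rightarrow> F K) = (case p of (K, x) \<Rightarrow> F (K - {x}))" by simp
  qed
  also have "\<dots> = (\<Sum>K\<in>SS W l. \<Sum>y\<in>W - K. F K)"
    by (rule sum.Sigma[symmetric]) (auto simp: SS_finite[OF W] W)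
  also have "\<dots> = (\<Sum>K\<in>SS W l. real (card (W - K)) * F K)" by simp
  finally show ?thesis .
qed

lemma psi_anti:
  fixes \<phi> :: "nat set \<Rightarrow> real"
  assumes W: "finite W" and nn: "\<And>K. K \<subseteq> W \<Longrightarrow> 0 \<le> \<phi> K"
    and anti: "\<And>K K'. K \<subseteq> K' \<Longrightarrow> K' \<subseteq> W \<Longrightarrow> \<phi> K' \<le> \<phi> K"
  shows "uniform_avg (SS W (Suc l)) \<phi> \<le> uniform_avg (SS W l) \<phi>"
proof -
  have cW: "\<And>K. K \<in> SS W l \<Longrightarrow> real (card (W - K)) = real (card W) - real l"
    unfolding SS_def using W by (auto simp: card_Diff_subset finite_subset of_nat_diff card_mono)
  have cK: "\<And>K. K \<in> SS W (Suc l) \<Longrightarrow> real (card K) = real l + 1" unfolding SS_def by auto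
  define S1 where "S1 = sum \<phi> (SS W (Suc l))"
  define S0 where "S0 = sum \<phi> (SS W l)"
  define C1 where "C1 = real (card (SS W (Suc l)))"
  define C0 where "C0 = real (card (SS W l))"
  have "(real l + 1) * S1 = (\<Sum>K\<in>SS W (Suc l). \<Sum>x\<in>K. \<phi> K)"
    unfolding S1_def sum_distrib_left by (rule sum.cong) (use cK in auto)
  also have "\<dots> \<le> (\<Sum>K\<in>SS W (Suc l). \<Sum>x\<in>K. \<phi> (K - {x}))"
    by (intro sum_mono anti) (auto simp: SS_def)
  also have "\<dots> = (\<Sum>K\<in>SS W l. real (card (W - K)) * \<phi> K)" by (rule pair_sum[OF W])
  also have "\<dots> = (real (card W) - real l) * S0" unfolding S0_def sum_distrib_left by (rule sum.cong) (use cW in auto)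
  finally have i1: "(real l + 1) * S1 \<le> (real (card W) - real l) * S0" .
  have "(real l + 1) * C1 = (\<Sum>K\<in>SS W (Suc l). \<Sum>x\<in>K. (1::real))"
    unfolding C1_def by (simp add: cK)
  also have "\<dots> = (\<Sum>K\<in>SS W l. real (card (W - K)) * 1)" by (rule pair_sum[OF W])
  also have "\<dots> = (real (card W) - real l) * C0" unfolding C0_def by (simp add: cW)
  finally have i2: "(real l + 1) * C1 = (real (card W) - real l) * C0" .
  have S0nn: "0 \<le> S0" unfolding S0_def by (rule sum_nonneg) (auto simp: SS_def nn)
  show ?thesis
  proof (cases "C1 = 0")
    case True
    thus ?thesis using S0nn unfolding uniform_avg_def S1_def[symmetric] S0_def[symmetric] C1_def[symmetric] C0_def[symmetric] by (simp add: C0_def)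
  next
    case False
    hence C1p: "C1 > 0" unfolding C1_def by simp
    hence pos: "(real (card W) - real l) * C0 > 0" using i2[symmetric] by simp
    have "S1 / C1 = ((real l + 1) * S1) / ((real l + 1) * C1)" by simp
    also have "\<dots> \<le> ((real (card W) - real l) * S0) / ((real l + 1) * C1)"
      using i1 C1p by (intro divide_right_mono) auto
    also have "\<dots> = S0 / C0" proof - have "real (card W) - real l \<noteq> 0" using pos by auto thus ?thesis unfolding i2 by simp qed
    finally show ?thesis unfolding uniform_avg_def S1_def[symmetric] S0_def[symmetric] C1_def[symmetric] C0_def[symmetric] .
  qed
qed

lemma SS_insert:
  assumes "finite V" "u \<notin> V"
  shows "SS (insert u V) (Suc l) = SS V (Suc l) \<union> insert u ` SS V l"
proof
  show "SS (insert u V) (Suc l) \<subseteq> SS V (Suc l) \<union> insert u ` SS V l"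
  proof
    fix K assume K: "K \<in> SS (insert u V) (Suc l)"
    hence fK: "finite K" using assms finite_subset unfolding SS_def by (metis finite_insert mem_Collect_eq)
    show "K \<in> SS V (Suc l) \<union> insert u ` SS V l"
    proof (cases "u \<in> K")
      case True
      hence "K - {u} \<in> SS V l" using K fK unfolding SS_def by auto
      moreover have "K = insert u (K - {u})" using True by auto
      ultimately show ?thesis by blast
    next
      case False thus ?thesis using K unfolding SS_def by auto
    qed
  qed
  show "SS V (Suc l) \<union> insert u ` SS V l \<subseteq> SS (insert u V) (Suc l)"
  proof
    fix K assume "K \<in> SS V (Suc l) \<union> insert u ` SS V l"
    thus "K \<in> SS (insert u V) (Suc l)"
    proof
      assume "K \<in> SS V (Suc l)" thus ?thesis unfolding SS_def by auto
    next
      assume "K \<in> insert u ` SS V l"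
      then obtain K' where K': "K' \<in> SS V l" "K = insert u K'" by blast
      have "finite K'" using K' assms finite_subset unfolding SS_def by blast
      moreover have "u \<notin> K'" using K' assms unfolding SS_def by auto
      ultimately show ?thesis using K' unfolding SS_def by auto
    qed
  qed
qed

lemma SS_zero: "finite V \<Longrightarrow> SS V 0 = {{}}"
  unfolding SS_def by (auto dest: finite_subset)

lemma GL_sum:
  fixes \<phi> :: "nat set \<Rightarrow> real"
  assumes W: "finite W" and E: "finite E" and dj: "E \<inter> W = {}"
    and nn: "\<And>K. K \<subseteq> W \<Longrightarrow> 0 \<le> \<phi> K"
    and anti: "\<And>K K'. K \<subseteq> K' \<Longrightarrow> K' \<subseteq> W \<Longrightarrow> \<phi> K' \<le> \<phi> K"
  shows "uniform_avg (SS W l) \<phi> * real (card (SS (W \<union> E) l)) \<le> (\<Sum>J\<in>SS (W \<union> E) l. \<phi> (J \<inter> W))"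
  using E dj
proof (induction E arbitrary: l rule: finite_induct)
  case empty
  have eq: "(\<Sum>J\<in>SS W l. \<phi> (J \<inter> W)) = sum \<phi> (SS W l)" by (rule sum.cong) (auto simp: SS_def Int_absorb2)
  show ?case
  proof (cases "card (SS W l) = 0")
    case True
    hence "SS W l = {}" using SS_finite[OF W] by simp
    thus ?thesis by simp
  next
    case False thus ?thesis unfolding uniform_avg_def using eq by simp
  qed
next
  case (insert u E)
  have uW: "u \<notin> W \<union> E" using insert by auto
  have djE: "E \<inter> W = {}" using insert by auto
  have finV: "finite (W \<union> E)" using W insert by simp
  have V: "W \<union> insert u E = insert u (W \<union> E)" by auto
  show ?case
  proof (cases l)
    case 0
    have "SS (insert u (W \<union> E)) 0 = SS (W \<union> E) 0" using SS_zero finV by simp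
    thus ?thesis using insert.IH[OF djE, of 0] 0 V by simp
  next
    case (Suc l')
    let ?A = "SS (W \<union> E) (Suc l')" and ?B = "SS (W \<union> E) l'"
    have split: "SS (W \<union> insert u E) l = ?A \<union> insert u ` ?B" unfolding V Suc by (rule SS_insert[OF finV uW])
    have dis: "?A \<inter> insert u ` ?B = {}" using uW unfolding SS_def by auto
    have inj: "inj_on (insert u) ?B" using uW unfolding SS_def inj_on_def by (metis Diff_insert_absorb mem_Collect_eq subsetD)
    have fA: "finite ?A" and fB: "finite ?B" using SS_finite[OF finV] by auto
    have cardS: "card (SS (W \<union> insert u E) l) = card ?A + card ?B"
      unfolding split using card_Un_disjoint[OF fA _ dis] card_image[OF inj] fB by simp
    have "(\<Sum>J\<in>SS (W \<union> insert u E) l. \<phi> (J \<inter> W)) = (\<Sum>J\<in>?A. \<phi> (J \<inter> W)) + (\<Sum>J\<in>insert u ` ?B. \<phi> (J \<inter> W))"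
      unfolding split using sum.union_disjoint[OF fA _ dis] fB by simp
    also have "(\<Sum>J\<in>insert u ` ?B. \<phi> (J \<inter> W)) = (\<Sum>J\<in>?B. \<phi> (insert u J \<inter> W))"
      using sum.reindex[OF inj] by simp
    also have "\<dots> = (\<Sum>J\<in>?B. \<phi> (J \<inter> W))" using uW by (intro sum.cong) auto
    finally have sm: "(\<Sum>J\<in>SS (W \<union> insert u E) l. \<phi> (J \<inter> W)) = (\<Sum>J\<in>?A. \<phi> (J \<inter> W)) + (\<Sum>J\<in>?B. \<phi> (J \<inter> W))" .
    have i1: "uniform_avg (SS W (Suc l')) \<phi> * real (card ?A) \<le> (\<Sum>J\<in>?A. \<phi> (J \<inter> W))" using insert.IH[OF djE] .
    have i2: "uniform_avg (SS W l') \<phi> * real (card ?B) \<le> (\<Sum>J\<in>?B. \<phi> (J \<inter> W))" using insert.IH[OF djE] .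
    have pa: "uniform_avg (SS W (Suc l')) \<phi> \<le> uniform_avg (SS W l') \<phi>" by (rule psi_anti[OF W nn anti])
    have "uniform_avg (SS W (Suc l')) \<phi> * real (card ?B) \<le> uniform_avg (SS W l') \<phi> * real (card ?B)"
      using pa by (intro mult_right_mono) auto
    hence fin: "uniform_avg (SS W (Suc l')) \<phi> * real (card ?A + card ?B) \<le> (\<Sum>J\<in>?A. \<phi> (J \<inter> W)) + (\<Sum>J\<in>?B. \<phi> (J \<inter> W))"
      using i1 i2 by (simp add: distrib_left)
    show ?thesis unfolding sm cardS using fin Suc by simp
  qed
qed

lemma GL:
  fixes \<phi> :: "nat set \<Rightarrow> real"
  assumes W: "finite W" and V: "finite V" and sub: "W \<subseteq> V"
    and nn: "\<And>K. K \<subseteq> W \<Longrightarrow> 0 \<le> \<phi> K"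
    and anti: "\<And>K K'. K \<subseteq> K' \<Longrightarrow> K' \<subseteq> W \<Longrightarrow> \<phi> K' \<le> \<phi> K"
  shows "uniform_avg (SS W l) \<phi> \<le> uniform_avg (SS V l) (\<lambda>J. \<phi> (J \<inter> W))"
proof -
  have VE: "V = W \<union> (V - W)" using sub by auto
  have i: "uniform_avg (SS W l) \<phi> * real (card (SS V l)) \<le> (\<Sum>J\<in>SS V l. \<phi> (J \<inter> W))"
    using GL_sum[where \<phi>=\<phi> and E="V - W" and l=l, OF W _ _ nn anti] V VE by auto
  show ?thesis
  proof (cases "card (SS V l) = 0")
    case True
    hence "SS V l = {}" using SS_finite[OF V] by simp
    hence "SS W l = {}" using sub unfolding SS_def by auto
    thus ?thesis using True by (simp add: uniform_avg_def)
  next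
    case False
    thus ?thesis using i unfolding uniform_avg_def by (simp add: pos_le_divide_eq)
  qed
qed

lemma avg_bij: "bij_betw h X Y \<Longrightarrow> (\<And>x. x \<in> X \<Longrightarrow> f x = f' (h x)) \<Longrightarrow> uniform_avg X f = uniform_avg Y f'"
  unfolding uniform_avg_def
  by (metis (no_types, lifting) bij_betw_same_card sum.cong sum.reindex_bij_betw)

lemma avg_mono: "(\<And>x. x \<in> X \<Longrightarrow> f x \<le> f' x) \<Longrightarrow> uniform_avg X f \<le> uniform_avg X f'"
  unfolding uniform_avg_def by (intro divide_right_mono sum_mono) auto

lemma avg_cmult: "uniform_avg X (\<lambda>x. c * f x) = c * uniform_avg X f"
  unfolding uniform_avg_def by (simp add: sum_distrib_left)

lemma avg_nonneg: "(\<And>x. x \<in> X \<Longrightarrow> 0 \<le> f x) \<Longrightarrow> 0 \<le> uniform_avg X f"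
  unfolding uniform_avg_def by (intro divide_nonneg_nonneg sum_nonneg) auto

lemma SS_bij: "bij_betw h A B \<Longrightarrow> bij_betw (image h) (SS A l) (SS B l)"
proof -
  assume b: "bij_betw h A B"
  have bp: "bij_betw (image h) (Pow A) (Pow B)" by (rule bij_betw_image_Pow[OF b])
  have eq: "card K = l \<longleftrightarrow> card (h ` K) = l" if "K \<in> Pow A" for K
  proof -
    have "inj_on h K" using b that unfolding bij_betw_def by (auto intro: inj_on_subset)
    thus ?thesis by (simp add: card_image)
  qed
  have "bij_betw (image h) {K\<in>Pow A. card K = l} {K\<in>Pow B. card K = l}"
    using bij_restrict[OF bp, where P="\<lambda>K. card K = l" and Q="\<lambda>K. card K = l"] eq by blast
  moreover have "{K\<in>Pow A. card K = l} = SS A l" "{K\<in>Pow B. card K = l} = SS B l" unfolding SS_def by auto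
  ultimately show ?thesis by simp
qed

lemma g_zero: "g l 0 = 0"
proof -
  have "{A. A \<subseteq> {1..0::nat} \<and> card A = l + 1} = {}" by auto
  thus ?thesis unfolding g_def uniform_avg_def by simp
qed

lemma g_nonneg: "0 \<le> g l n"
  unfolding g_def by (rule avg_nonneg) simp

lemma lgap_01: "finite K \<Longrightarrow> a < b \<Longrightarrow> K \<subseteq> {a..b} \<Longrightarrow> K \<subseteq> K' \<Longrightarrow> finite K' \<Longrightarrow> K' \<subseteq> {a..b} \<Longrightarrow>
  lgap (insert a (insert b K')) \<le> lgap (insert a (insert b K))"
  by (rule lgap_anti[of _ _ a b]) auto

lemma g_mono:
  assumes n: "n \<ge> 1"
  shows "g l n \<le> g l (Suc n)"
proof -
  define W where "W = {1..<n}"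
  define V where "V = {1..<Suc n}"
  define \<phi> where "\<phi> = (\<lambda>K. real (lgap (insert 0 (insert n K))))"
  have "g l n = uniform_avg (SS W l) \<phi>" unfolding g_pointed[OF n] W_def \<phi>_def SS_def ..
  also have "\<dots> \<le> uniform_avg (SS V l) (\<lambda>J. \<phi> (J \<inter> W))"
  proof (rule GL)
    show "finite W" "finite V" "W \<subseteq> V" unfolding W_def V_def by auto
    show "0 \<le> \<phi> K" for K unfolding \<phi>_def by simp
    fix K K' assume "K \<subseteq> K'" "K' \<subseteq> W"
    moreover hence "finite K'" "finite K" unfolding W_def by (auto intro: finite_subset)
    ultimately show "\<phi> K' \<le> \<phi> K" unfolding \<phi>_def W_def using n
      by (simp, intro lgap_01) auto
  qed
  also have "\<dots> \<le> uniform_avg (SS V l) (\<lambda>J. real (lgap (insert 0 (insert (Suc n) J))))"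
  proof (rule avg_mono)
    fix J assume J: "J \<in> SS V l"
    hence Jv: "J \<subseteq> {1..n}" unfolding SS_def V_def by auto
    hence fJ: "finite J" by (auto intro: finite_subset)
    let ?T = "insert 0 (insert (Suc n) J)"
    have img: "(\<lambda>x. min x n) ` ?T = insert 0 (insert n (J \<inter> W))"
    proof
      show "(\<lambda>x. min x n) ` ?T \<subseteq> insert 0 (insert n (J \<inter> W))" using Jv unfolding W_def by (auto simp: min_def)
      show "insert 0 (insert n (J \<inter> W)) \<subseteq> (\<lambda>x. min x n) ` ?T"
      proof
        fix y assume "y \<in> insert 0 (insert n (J \<inter> W))"
        moreover have "min 0 n = 0" "min (Suc n) n = n" by auto
        moreover have "y \<in> J \<inter> W \<Longrightarrow> min y n = y" unfolding W_def by auto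
        ultimately show "y \<in> (\<lambda>x. min x n) ` ?T" by (metis IntD1 image_eqI insertCI insertE)
      qed
    qed
    have "1 * lgap ((\<lambda>x. min x n) ` ?T) \<le> lgap ?T"
    proof (rule lgap_mono_ge[of _ 0 _ n])
      show "0 \<in> (\<lambda>x. min x n) ` ?T" "n \<in> (\<lambda>x. min x n) ` ?T" unfolding img by auto
    qed (use n fJ in auto)
    thus "\<phi> (J \<inter> W) \<le> real (lgap ?T)" unfolding \<phi>_def img by simp
  qed
  also have "\<dots> = g l (Suc n)" using g_pointed[of "Suc n" l] unfolding V_def SS_def by simp
  finally show ?thesis .
qed



lemma mod_cancel: "((x::nat) + k) mod L = (y + k) mod L \<Longrightarrow> x mod L = y mod L"
  by (simp add: nat_mod_eq_iff)

lemma rot_res: "Lam dvd n \<Longrightarrow> x \<in> {1..n} \<Longrightarrow> rot n x mod Lam = Suc x mod Lam"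
proof -
  assume d: "Lam dvd n" and x: "x \<in> {1..n}"
  show ?thesis
  proof (cases "x < n")
    case True thus ?thesis by (simp add: rot_def)
  next
    case False
    hence "x = n" using x by auto
    moreover have "Suc n mod Lam = 1 mod Lam" using d by (simp add: mod_Suc)
    ultimately show ?thesis by (simp add: rot_def)
  qed
qed

lemma rotk_res: "n \<ge> 1 \<Longrightarrow> Lam dvd n \<Longrightarrow> x \<in> {1..n} \<Longrightarrow> (rot n ^^ k) x mod Lam = (x + k) mod Lam"
proof (induction k)
  case (Suc k)
  have "(rot n ^^ k) x \<in> {1..n}" using rotk_bij[OF Suc.prems(1), of k] Suc.prems(3) bij_betwE by blast
  hence "(rot n ^^ Suc k) x mod Lam = Suc ((rot n ^^ k) x) mod Lam" using rot_res[OF Suc.prems(2)] by simp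
  also have "\<dots> = Suc ((rot n ^^ k) x mod Lam) mod Lam" by (simp add: mod_Suc_eq)
  also have "\<dots> = (x + Suc k) mod Lam" using Suc by (simp add: mod_Suc_eq)
  finally show ?case .
qed simp

lemma drop_set_char:
  assumes L: "Lam \<ge> 1" and lam: "lam \<in> {1..Lam}"
  shows "drop_set Lam eta lam = {x\<in>{1..eta * Lam}. x mod Lam = lam mod Lam}"
proof
  show "drop_set Lam eta lam \<subseteq> {x\<in>{1..eta * Lam}. x mod Lam = lam mod Lam}"
  proof
    fix x assume "x \<in> drop_set Lam eta lam"
    then obtain k where k: "k < eta" "x = lam + k * Lam" unfolding drop_set_def by blast
    have "lam + k * Lam \<le> Lam + k * Lam" using lam by simp
    also have "\<dots> = Suc k * Lam" by simp
    also have "\<dots> \<le> eta * Lam" using k(1) by (intro mult_right_mono) auto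
    finally have "x \<le> eta * Lam" using k(2) by simp
    moreover have "x mod Lam = lam mod Lam" using k(2) by simp
    moreover have "1 \<le> x" using k(2) lam by simp
    ultimately show "x \<in> {x\<in>{1..eta * Lam}. x mod Lam = lam mod Lam}" by simp
  qed
  show "{x\<in>{1..eta * Lam}. x mod Lam = lam mod Lam} \<subseteq> drop_set Lam eta lam"
  proof
    fix x assume x: "x \<in> {x\<in>{1..eta * Lam}. x mod Lam = lam mod Lam}"
    hence x1: "1 \<le> x" "x \<le> eta * Lam" and xm: "x mod Lam = lam mod Lam" by auto
    have "lam \<le> x"
    proof (cases "lam = Lam")
      case True
      hence "x mod Lam = 0" using xm by simp
      hence "Lam dvd x" by (rule mod_0_imp_dvd)
      hence "Lam \<le> x" using x1 by (intro dvd_imp_le) auto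
      thus ?thesis using True by simp
    next
      case False
      hence "lam < Lam" using lam by simp
      hence "lam mod Lam = lam" by (rule mod_less)
      hence "x mod Lam = lam" using xm by simp
      thus ?thesis using mod_less_eq_dividend[of x Lam] by simp
    qed
    hence "Lam dvd x - lam" using xm mod_eq_dvd_iff_nat[of lam x Lam] by simp
    then obtain k where "x - lam = Lam * k" by (rule dvdE)
    hence k: "x = lam + k * Lam" using \<open>lam \<le> x\<close> by (simp add: mult.commute)
    have "k < eta"
    proof (rule ccontr)
      assume "\<not> k < eta"
      hence "eta * Lam \<le> k * Lam" by (intro mult_right_mono) auto
      moreover have "k * Lam < x" using k lam by simp
      ultimately show False using x1 by linarith
    qed
    thus "x \<in> drop_set Lam eta lam" unfolding drop_set_def using k by blast
  qed
qed

lemma cond_normal: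
  assumes L: "Lam \<ge> 1" and e: "eta \<ge> 1" and N: "N = eta * Lam"
    and lam: "lam \<in> {1..Lam}" and S: "S \<in> {1..N}"
  shows "\<exists>r<Lam. cond_exp_clg Lam eta lam S l =
     uniform_avg (SS ({x\<in>{1..N}. x mod Lam = r} - {N}) l) (\<lambda>F. real (lgap (insert 0 (insert N F))))"
proof -
  have n1: "N \<ge> 1" using L e N by simp
  have dv: "Lam dvd N" using N by simp
  define M where "M = {x\<in>{1..N}. x mod Lam = lam mod Lam}"
  define \<rho> where "\<rho> = rot N ^^ (N - S)"
  define r where "r = (lam + (N - S)) mod Lam"
  define R where "R = {x\<in>{1..N}. x mod Lam = r}"
  have rL: "r < Lam" unfolding r_def using L by simp
  have hb: "bij_betw \<rho> {1..N} {1..N}" unfolding \<rho>_def by (rule rotk_bij[OF n1])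
  have inj: "inj_on \<rho> {1..N}" using hb bij_betw_def by blast
  have \<rho>S: "\<rho> S = N" unfolding \<rho>_def using S by (subst rotk_add) auto
  have res: "\<And>x. x \<in> {1..N} \<Longrightarrow> \<rho> x mod Lam = (x + (N - S)) mod Lam"
    unfolding \<rho>_def by (rule rotk_res[OF n1 dv])
  have MR: "\<rho> ` M = R"
  proof
    show "\<rho> ` M \<subseteq> R"
    proof
      fix y assume "y \<in> \<rho> ` M"
      then obtain x where x: "x \<in> M" "y = \<rho> x" by blast
      have "y \<in> {1..N}" using x hb bij_betwE unfolding M_def by blast
      moreover have "y mod Lam = r"
      proof -
        have "x \<in> {1..N}" "x mod Lam = lam mod Lam" using x unfolding M_def by auto
        thus ?thesis using x res unfolding r_def by (metis mod_add_left_eq)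
      qed
      ultimately show "y \<in> R" unfolding R_def by simp
    qed
    show "R \<subseteq> \<rho> ` M"
    proof
      fix y assume y: "y \<in> R"
      have "y \<in> {1..N}" using y unfolding R_def by simp
      hence "y \<in> \<rho> ` {1..N}" using hb unfolding bij_betw_def by simp
      then obtain x where x: "x \<in> {1..N}" "y = \<rho> x" by blast
      have "(x + (N - S)) mod Lam = (lam + (N - S)) mod Lam" using res[OF x(1)] x y unfolding R_def r_def by simp
      hence "x mod Lam = lam mod Lam" by (rule mod_cancel)
      thus "y \<in> \<rho> ` M" using x unfolding M_def by auto
    qed
  qed
  have Ssub: "S \<in> {1..N}" by (rule S)
  have MN: "M \<subseteq> {1..N}" unfolding M_def by auto
  have b2: "bij_betw \<rho> (M - {S}) (R - {N})"
  proof (rule bij_betw_subset[OF hb])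
    show "M - {S} \<subseteq> {1..N}" using MN by auto
    show "\<rho> ` (M - {S}) = R - {N}" 
    proof -
      have "\<rho> ` (M - {S}) = \<rho> ` M - \<rho> ` {S}" by (rule inj_on_image_set_diff[OF inj]) (use MN S in auto)
      thus ?thesis using MR \<rho>S by simp
    qed
  qed
  have bSS: "bij_betw (image \<rho>) (SS (M - {S}) l) (SS (R - {N}) l)" by (rule SS_bij[OF b2])
  have cdef: "cond_exp_clg Lam eta lam S l = uniform_avg (SS (M - {S}) l) (\<lambda>F. real (clg_length N (insert S F)))"
    unfolding cond_exp_clg_def SS_def M_def drop_set_char[OF L lam] N ..
  have "uniform_avg (SS (M - {S}) l) (\<lambda>F. real (clg_length N (insert S F))) =
        uniform_avg (SS (R - {N}) l) (\<lambda>F. real (lgap (insert 0 (insert N F))))"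
  proof (rule avg_bij[OF bSS])
    fix F assume F: "F \<in> SS (M - {S}) l"
    hence Fs: "F \<subseteq> M - {S}" unfolding SS_def by auto
    have "clg_length N (insert S F) = clg_length N (\<rho> ` insert S F)"
    proof -
      have Fsub: "insert S F \<subseteq> {1..N}" using Fs MN S by auto
      show ?thesis using clg_rotk[OF n1 Fsub, of "N - S"] unfolding \<rho>_def by simp
    qed
    also have "\<rho> ` insert S F = insert N (\<rho> ` F)" using \<rho>S by simp
    also have "clg_length N (insert N (\<rho> ` F)) = lgap (insert 0 (insert N (\<rho> ` F)))"
    proof (rule clg_pointed[OF n1])
      have "\<rho> ` F \<subseteq> R - {N}" using b2 Fs bij_betwE by blast
      thus "\<rho> ` F \<subseteq> {1..<N}" unfolding R_def by auto
    qed
    finally show "real (clg_length N (insert S F)) = real (lgap (insert 0 (insert N (\<rho> ` F))))" by simp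
  qed
  hence "cond_exp_clg Lam eta lam S l = uniform_avg (SS (R - {N}) l) (\<lambda>F. real (lgap (insert 0 (insert N F))))"
    using cdef by simp
  thus ?thesis using rL unfolding R_def by (intro exI[of _ r]) simp
qed

lemma lgap_scale:
  assumes L: "Lam \<ge> (1::nat)" and fin: "finite T" and two: "a \<in> T" "b \<in> T" "a < b"
  shows "lgap ((\<lambda>x. x * Lam) ` T) = Lam * lgap T"
proof -
  let ?T' = "(\<lambda>x. x * Lam) ` T"
  have img: "(\<lambda>x. x div Lam) ` ?T' = T" using L by (auto simp: image_comp o_def)
  have f': "finite ?T'" using fin by simp
  have "lgap ?T' \<le> Lam * lgap ((\<lambda>x. x div Lam) ` ?T')"
  proof (rule lgap_mono_le[OF f', of "a * Lam" "b * Lam"])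
    show "a * Lam \<in> ?T'" "b * Lam \<in> ?T'" using two by auto
    show "a * Lam < b * Lam" using two L by simp
    fix x y assume "x \<in> ?T'" "y \<in> ?T'" "x < y"
    then obtain u v where "x = u * Lam" "y = v * Lam" by blast
    thus "x div Lam < y div Lam \<and> y - x \<le> Lam * (y div Lam - x div Lam)" using \<open>x < y\<close> L
      by (auto simp: diff_mult_distrib2 mult.commute)
  qed
  moreover have "Lam * lgap ((\<lambda>x. x div Lam) ` ?T') \<le> lgap ?T'"
  proof (rule lgap_mono_ge[OF f', of a _ b])
    show "a \<in> (\<lambda>x. x div Lam) ` ?T'" "b \<in> (\<lambda>x. x div Lam) ` ?T'" using img two by auto
    show "a < b" by (rule two)
    fix x y assume "x \<in> ?T'" "y \<in> ?T'"
    then obtain u v where uv: "x = u * Lam" "y = v * Lam" by blast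
    show "x \<le> y \<Longrightarrow> x div Lam \<le> y div Lam" by (rule div_le_mono)
    show "x < y \<Longrightarrow> Lam * (y div Lam - x div Lam) \<le> y - x" using uv L
      by (auto simp: diff_mult_distrib2 mult.commute)
  qed
  ultimately show ?thesis using img by simp
qed

lemma lgap_shift:
  assumes fin: "finite T" and two: "a \<in> T" "b \<in> T" "a < b"
  shows "lgap (Suc ` T) = lgap T"
proof -
  have f': "finite (Suc ` T)" using fin by simp
  have "lgap T \<le> 1 * lgap (Suc ` T)"
    by (rule lgap_mono_le[OF fin two]) auto
  moreover have "1 * lgap (Suc ` T) \<le> lgap T"
    by (rule lgap_mono_ge[OF fin, of "Suc a" _ "Suc b"]) (use two in auto)
  ultimately show ?thesis by simp
qed

lemma case0:
  assumes L: "Lam \<ge> 1" and e: "eta \<ge> 1" and N: "N = eta * Lam"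
  shows "uniform_avg (SS ({x\<in>{1..N}. x mod Lam = 0} - {N}) l) (\<lambda>F. real (lgap (insert 0 (insert N F))))
         = real Lam * g l eta"
proof -
  define R where "R = {x\<in>{1..N}. x mod Lam = 0} - {N}"
  have b: "bij_betw (\<lambda>i. i * Lam) {1..<eta} R"
  proof (rule bij_betw_byWitness[where f' = "\<lambda>x. x div Lam"])
    show "\<forall>a\<in>{1..<eta}. a * Lam div Lam = a" using L by simp
    show "\<forall>a'\<in>R. a' div Lam * Lam = a'" unfolding R_def by (auto simp: mult.commute)
    show "(\<lambda>i. i * Lam) ` {1..<eta} \<subseteq> R"
    proof
      fix y assume "y \<in> (\<lambda>i. i * Lam) ` {1..<eta}"
      then obtain i where i: "1 \<le> i" "i < eta" "y = i * Lam" by auto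
      have "i * Lam < eta * Lam" using i L by simp
      moreover have "1 \<le> i * Lam" using i L by simp
      ultimately show "y \<in> R" unfolding R_def N using i by auto
    qed
    show "(\<lambda>x. x div Lam) ` R \<subseteq> {1..<eta}"
    proof
      fix y assume "y \<in> (\<lambda>x. x div Lam) ` R"
      then obtain x where x: "x \<in> R" "y = x div Lam" by blast
      have x1: "1 \<le> x" "x < eta * Lam" "x mod Lam = 0" using x unfolding R_def N by auto
      have "Lam dvd x" using x1(3) by (rule mod_0_imp_dvd)
      hence "Lam \<le> x" using x1(1) by (intro dvd_imp_le) auto
      hence "1 \<le> x div Lam" using div_le_mono[OF \<open>Lam \<le> x\<close>, of Lam] L by simp
      moreover have "x div Lam < eta" using x1 L by (simp add: div_less_iff_less_mult)
      ultimately show "y \<in> {1..<eta}" using x by simp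
    qed
  qed
  have "uniform_avg (SS {1..<eta} l) (\<lambda>J. real Lam * real (lgap (insert 0 (insert eta J))))
        = uniform_avg (SS R l) (\<lambda>F. real (lgap (insert 0 (insert N F))))"
  proof (rule avg_bij[OF SS_bij[OF b]])
    fix J assume J: "J \<in> SS {1..<eta} l"
    hence "finite J" unfolding SS_def by (auto intro: finite_subset)
    have "(\<lambda>i. i * Lam) ` insert 0 (insert eta J) = insert 0 (insert N ((\<lambda>i. i * Lam) ` J))" using N by simp
    moreover have "lgap ((\<lambda>i. i * Lam) ` insert 0 (insert eta J)) = Lam * lgap (insert 0 (insert eta J))"
      by (rule lgap_scale[OF L, of _ 0 eta]) (use e \<open>finite J\<close> in auto)
    ultimately show "real Lam * real (lgap (insert 0 (insert eta J))) = real (lgap (insert 0 (insert N ((\<lambda>i. i * Lam) ` J))))"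
      by simp
  qed
  moreover have "uniform_avg (SS {1..<eta} l) (\<lambda>J. real (lgap (insert 0 (insert eta J)))) = g l eta"
    unfolding g_pointed[OF e] SS_def ..
  ultimately show ?thesis unfolding R_def by (simp add: avg_cmult)
qed

lemma ar1: "(r::nat) < Lam \<Longrightarrow> r + b*Lam - 0 \<le> Lam*(b+1 - 0)" by (simp add: algebra_simps)
lemma ar2: "(r::nat) + a*Lam < r + b*Lam \<Longrightarrow> a < b \<and> (r+b*Lam) - (r+a*Lam) \<le> Lam*((b+1)-(a+1))" by (simp add: algebra_simps diff_mult_distrib2)
lemma ar3: "(a::nat) < eta \<Longrightarrow> eta*Lam - (r + a*Lam) \<le> Lam*((eta+1) - (a+1))" by (simp add: algebra_simps diff_mult_distrib2)
lemma lr1: "(Lam::nat)*((b+1) - 1) \<le> r + b*Lam - 0" by (simp add: algebra_simps)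
lemma lr3: "(a::nat) < eta \<Longrightarrow> r \<le> Lam \<Longrightarrow> Lam*(eta - (a+1)) \<le> eta*Lam - (r + a*Lam)" by (simp add: algebra_simps diff_mult_distrib2)
lemma lr0: "(Lam::nat)*(eta - 1) \<le> eta*Lam - 0" by (simp add: algebra_simps diff_mult_distrib2)
lemma ar0: "(Lam::nat) \<ge> 1 \<Longrightarrow> eta*Lam - 0 \<le> Lam*(eta+1 - 0)" by (simp add: algebra_simps)

locale c2 =
  fixes Lam eta N r :: nat
  assumes L: "Lam \<ge> 1" and e: "eta \<ge> 1" and N: "N = eta * Lam" and r0: "0 < r" and rL: "r < Lam"
begin

definition R where "R = {x\<in>{1..N}. x mod Lam = r}"

lemma R_elem: "x \<in> R \<Longrightarrow> x = r + (x div Lam) * Lam \<and> x div Lam < eta \<and> x \<noteq> 0 \<and> x \<noteq> N"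
proof -
  assume x: "x \<in> R"
  hence x1: "1 \<le> x" "x \<le> N" "x mod Lam = r" unfolding R_def by auto
  have "x = x div Lam * Lam + x mod Lam" by simp
  hence xe: "x = r + (x div Lam) * Lam" using x1 by simp
  have "x \<noteq> N" using x1 r0 N by auto
  hence "x < eta * Lam" using x1 N by simp
  hence "x div Lam < eta" using L by (simp add: div_less_iff_less_mult)
  thus ?thesis using xe \<open>x \<noteq> N\<close> x1 by simp
qed

lemma lat_div: "(r + a * Lam) div Lam = a"
  using rL by simp

definition \<tau> where "\<tau> x = x div Lam + 1"

lemma tau_bij: "bij_betw \<tau> R {1..eta}"
proof (rule bij_betw_byWitness[where f' = "\<lambda>j. r + (j - 1) * Lam"])
  show "\<forall>a\<in>R. r + (\<tau> a - 1) * Lam = a" unfolding \<tau>_def using R_elem by auto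
  show "\<forall>a'\<in>{1..eta}. \<tau> (r + (a' - 1) * Lam) = a'" unfolding \<tau>_def using lat_div by auto
  show "\<tau> ` R \<subseteq> {1..eta}" unfolding \<tau>_def using R_elem by fastforce
  show "(\<lambda>j. r + (j - 1) * Lam) ` {1..eta} \<subseteq> R"
  proof
    fix y assume "y \<in> (\<lambda>j. r + (j - 1) * Lam) ` {1..eta}"
    then obtain j where j: "1 \<le> j" "j \<le> eta" "y = r + (j - 1) * Lam" by auto
    have "(j - 1) * Lam + Lam = j * Lam" using j by (metis Suc_diff_1 less_le_trans mult_Suc zero_less_one add.commute)
    moreover have "j * Lam \<le> eta * Lam" using j by (intro mult_right_mono) auto
    ultimately have "r + (j - 1) * Lam \<le> eta * Lam" using rL by linarith
    moreover have "(r + (j - 1) * Lam) mod Lam = r" using rL by simp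
    ultimately show "y \<in> R" unfolding R_def using j r0 N by auto
  qed
qed

lemma pairs:
  assumes F: "F \<subseteq> R" and x: "x \<in> insert 0 (insert N F)" and y: "y \<in> insert 0 (insert N F)" and xy: "x < y"
  shows "(x = 0 \<and> y = N) \<or> (x = 0 \<and> y \<in> F) \<or> (x \<in> F \<and> y \<in> F) \<or> (x \<in> F \<and> y = N)"
proof -
  have "\<And>z. z \<in> F \<Longrightarrow> z \<le> N" using F unfolding R_def by auto
  hence "y \<le> N" using y by auto
  hence "x \<noteq> N" "y \<noteq> 0" using xy by auto
  thus ?thesis using x y by auto
qed

lemma upper_pt:
  assumes F: "F \<subseteq> R"
  shows "lgap (insert 0 (insert N F)) \<le> Lam * lgap (insert 0 (insert (eta + 1) (\<tau> ` F)))"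
proof -
  define \<sigma> where "\<sigma> z = (if z = 0 then 0 else if z = N then eta + 1 else \<tau> z)" for z
  have fF: "finite F" using F unfolding R_def by (auto intro: finite_subset)
  have img: "\<sigma> ` insert 0 (insert N F) = insert 0 (insert (eta + 1) (\<tau> ` F))"
  proof -
    have "N \<noteq> 0" using N L e by simp
    moreover have "\<sigma> ` F = \<tau> ` F" unfolding \<sigma>_def using F R_elem by (intro image_cong) auto
    moreover have "\<sigma> 0 = 0" "\<sigma> N = eta + 1" unfolding \<sigma>_def using \<open>N \<noteq> 0\<close> by auto
    ultimately show ?thesis by simp
  qed
  have "lgap (insert 0 (insert N F)) \<le> Lam * lgap (\<sigma> ` insert 0 (insert N F))"
  proof (rule lgap_mono_le[of _ 0 N])
    show "finite (insert 0 (insert N F))" using fF by simp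
    show "0 \<in> insert 0 (insert N F)" "N \<in> insert 0 (insert N F)" by auto
    show "0 < N" using N L e by simp
    fix x y assume xT: "x \<in> insert 0 (insert N F)" and yT: "y \<in> insert 0 (insert N F)" and xy: "x < y"
    have N0: "N \<noteq> 0" using N L e by simp
    from pairs[OF F xT yT xy]
    show "\<sigma> x < \<sigma> y \<and> y - x \<le> Lam * (\<sigma> y - \<sigma> x)"
    proof (elim disjE conjE)
      assume "x = 0" "y = N" thus ?thesis using N0 N ar0[OF L, of eta] unfolding \<sigma>_def by simp
    next
      assume a: "x = 0" "y \<in> F"
      then obtain b where b: "y = r + b * Lam" "b < eta" "y \<noteq> 0" "y \<noteq> N" using R_elem F by blast
      thus ?thesis using a ar1[OF rL, of b] lat_div unfolding \<sigma>_def \<tau>_def by simp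
    next
      assume a: "x \<in> F" "y \<in> F"
      then obtain b where b: "y = r + b * Lam" "b < eta" "y \<noteq> 0" "y \<noteq> N" using R_elem F by blast
      obtain c where c: "x = r + c * Lam" "c < eta" "x \<noteq> 0" "x \<noteq> N" using R_elem F a by blast
      show ?thesis using ar2[of r c Lam b] xy b c lat_div unfolding \<sigma>_def \<tau>_def by simp
    next
      assume a: "x \<in> F" "y = N"
      obtain c where c: "x = r + c * Lam" "c < eta" "x \<noteq> 0" "x \<noteq> N" using R_elem F a by blast
      show ?thesis using ar3[OF c(2), of Lam r] a c lat_div N N0 unfolding \<sigma>_def \<tau>_def by simp
    qed
  qed
  thus ?thesis unfolding img .
qed

lemma lower_pt:
  assumes F: "F \<subseteq> R" and e2: "eta \<ge> 2"
  shows "Lam * lgap (insert 1 (insert eta (\<tau> ` F))) \<le> lgap (insert 0 (insert N F))"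
proof -
  define \<sigma> where "\<sigma> z = (if z = 0 then 1 else if z = N then eta else \<tau> z)" for z
  have fF: "finite F" using F unfolding R_def by (auto intro: finite_subset)
  have N0: "N \<noteq> 0" using N L e by simp
  have img: "\<sigma> ` insert 0 (insert N F) = insert 1 (insert eta (\<tau> ` F))"
  proof -
    have "\<sigma> ` F = \<tau> ` F" unfolding \<sigma>_def using F R_elem by (intro image_cong) auto
    moreover have "\<sigma> 0 = 1" "\<sigma> N = eta" unfolding \<sigma>_def using N0 by auto
    ultimately show ?thesis by simp
  qed
  have tauF: "\<And>z. z \<in> F \<Longrightarrow> 1 \<le> \<tau> z \<and> \<tau> z \<le> eta" using tau_bij F bij_betwE by fastforce
  have "Lam * lgap (\<sigma> ` insert 0 (insert N F)) \<le> lgap (insert 0 (insert N F))"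
  proof (rule lgap_mono_ge[of _ 1 _ eta])
    show "finite (insert 0 (insert N F))" using fF by simp
    show "1 \<in> \<sigma> ` insert 0 (insert N F)" "eta \<in> \<sigma> ` insert 0 (insert N F)" unfolding img by auto
    show "1 < eta" using e2 by simp
    fix x y assume xT: "x \<in> insert 0 (insert N F)" and yT: "y \<in> insert 0 (insert N F)"
    show "x \<le> y \<Longrightarrow> \<sigma> x \<le> \<sigma> y"
    proof -
      assume "x \<le> y"
      show ?thesis
      proof (cases "x = y")
        case False
        hence xy: "x < y" using \<open>x \<le> y\<close> by simp
        from pairs[OF F xT yT xy] show ?thesis
        proof (elim disjE conjE)
          assume "x = 0" "y = N" thus ?thesis using e N0 unfolding \<sigma>_def by simp
        next
          assume "x = 0" "y \<in> F" thus ?thesis using tauF R_elem F unfolding \<sigma>_def by auto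
        next
          assume a: "x \<in> F" "y \<in> F"
          hence "x div Lam \<le> y div Lam" using xy by (simp add: div_le_mono)
          thus ?thesis using a R_elem F unfolding \<sigma>_def \<tau>_def by auto
        next
          assume "x \<in> F" "y = N" thus ?thesis using tauF R_elem F N0 unfolding \<sigma>_def by auto
        qed
      qed simp
    qed
    assume xy: "x < y"
    from pairs[OF F xT yT xy]
    show "Lam * (\<sigma> y - \<sigma> x) \<le> y - x"
    proof (elim disjE conjE)
      assume "x = 0" "y = N" thus ?thesis using N0 N lr0[of Lam eta] unfolding \<sigma>_def by simp
    next
      assume a: "x = 0" "y \<in> F"
      then obtain b where b: "y = r + b * Lam" "b < eta" "y \<noteq> 0" "y \<noteq> N" using R_elem F by blast
      thus ?thesis using a lr1[of Lam b r] lat_div unfolding \<sigma>_def \<tau>_def by simp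
    next
      assume a: "x \<in> F" "y \<in> F"
      then obtain b where b: "y = r + b * Lam" "b < eta" "y \<noteq> 0" "y \<noteq> N" using R_elem F by blast
      obtain c where c: "x = r + c * Lam" "c < eta" "x \<noteq> 0" "x \<noteq> N" using R_elem F a by blast
      show ?thesis using ar2[of r c Lam b] xy b c lat_div unfolding \<sigma>_def \<tau>_def by (simp add: diff_mult_distrib2 mult.commute)
    next
      assume a: "x \<in> F" "y = N"
      obtain c where c: "x = r + c * Lam" "c < eta" "x \<noteq> 0" "x \<noteq> N" using R_elem F a by blast
      show ?thesis using lr3[OF c(2), of r Lam] rL a c lat_div N N0 unfolding \<sigma>_def \<tau>_def by simp
    qed
  qed
  thus ?thesis unfolding img .
qed

lemma R_noN: "R - {N} = R" using R_elem by auto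

lemma finR: "finite R" unfolding R_def by simp

lemma upper:
  "uniform_avg (SS (R - {N}) l) (\<lambda>F. real (lgap (insert 0 (insert N F)))) \<le> real Lam * g l (eta + 1)"
proof -
  have "uniform_avg (SS R l) (\<lambda>F. real (lgap (insert 0 (insert N F))))
     \<le> uniform_avg (SS R l) (\<lambda>F. real Lam * real (lgap (insert 0 (insert (eta + 1) (\<tau> ` F)))))"
    by (rule avg_mono) (use upper_pt in \<open>auto simp: SS_def simp flip: of_nat_mult\<close>)
  also have "\<dots> = real Lam * uniform_avg (SS R l) (\<lambda>F. real (lgap (insert 0 (insert (eta + 1) (\<tau> ` F)))))"
    by (rule avg_cmult)
  also have "uniform_avg (SS R l) (\<lambda>F. real (lgap (insert 0 (insert (eta + 1) (\<tau> ` F)))))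
      = uniform_avg (SS {1..eta} l) (\<lambda>J. real (lgap (insert 0 (insert (eta + 1) J))))"
    by (rule avg_bij[OF SS_bij[OF tau_bij]]) simp
  also have "\<dots> = g l (eta + 1)"
    using g_pointed[of "eta + 1" l] unfolding SS_def by (simp add: atLeastLessThanSuc_atLeastAtMost)
  finally show ?thesis unfolding R_noN .
qed

lemma lower:
  assumes e2: "eta \<ge> 2"
  shows "real Lam * g l (eta - 1) \<le> uniform_avg (SS (R - {N}) l) (\<lambda>F. real (lgap (insert 0 (insert N F))))"
proof -
  define W where "W = {2..<eta}"
  define \<phi> where "\<phi> = (\<lambda>K. real (lgap (insert 1 (insert eta K))))"
  have e1: "eta - 1 \<ge> 1" using e2 by simp
  have "g l (eta - 1) = uniform_avg (SS {1..<eta - 1} l) (\<lambda>I. real (lgap (insert 0 (insert (eta - 1) I))))"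
    unfolding g_pointed[OF e1] SS_def ..
  also have "\<dots> = uniform_avg (SS W l) \<phi>"
  proof (rule avg_bij[OF SS_bij])
    show "bij_betw Suc {1..<eta - 1} W" unfolding W_def using e2
      by (simp add: bij_betw_def image_Suc_atLeastLessThan numeral_2_eq_2)
    fix I assume I: "I \<in> SS {1..<eta - 1} l"
    hence fI: "finite I" unfolding SS_def by (auto intro: finite_subset)
    have "Suc ` insert 0 (insert (eta - 1) I) = insert 1 (insert eta (Suc ` I))" using e2 by simp
    moreover have "lgap (Suc ` insert 0 (insert (eta - 1) I)) = lgap (insert 0 (insert (eta - 1) I))"
      by (rule lgap_shift[of _ 0 "eta - 1"]) (use fI e1 in auto)
    ultimately show "real (lgap (insert 0 (insert (eta - 1) I))) = \<phi> (Suc ` I)" unfolding \<phi>_def by simp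
  qed
  also have "\<dots> \<le> uniform_avg (SS {1..eta} l) (\<lambda>J. \<phi> (J \<inter> W))"
  proof (rule GL)
    show "finite W" "finite {1..eta}" "W \<subseteq> {1..eta}" unfolding W_def by auto
    show "0 \<le> \<phi> K" for K unfolding \<phi>_def by simp
    fix K K' assume "K \<subseteq> K'" "K' \<subseteq> W"
    moreover hence "finite K'" "finite K" unfolding W_def by (auto intro: finite_subset)
    ultimately show "\<phi> K' \<le> \<phi> K" unfolding \<phi>_def W_def using e2
      by (simp, intro lgap_01) auto
  qed
  also have "\<dots> = uniform_avg (SS {1..eta} l) (\<lambda>J. real (lgap (insert 1 (insert eta J))))"
  proof (rule avg_bij[where h = id])
    show "bij_betw id (SS {1..eta} l) (SS {1..eta} l)" by simp
    fix J assume "J \<in> SS {1..eta} l"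
    hence "insert 1 (insert eta (J \<inter> W)) = insert 1 (insert eta J)" unfolding SS_def W_def by auto
    thus "\<phi> (J \<inter> W) = real (lgap (insert 1 (insert eta (id J))))" unfolding \<phi>_def by simp
  qed
  also have "\<dots> = uniform_avg (SS R l) (\<lambda>F. real (lgap (insert 1 (insert eta (\<tau> ` F)))))"
    by (rule avg_bij[OF SS_bij[OF tau_bij], symmetric]) simp
  finally have "real Lam * g l (eta - 1) \<le> real Lam * uniform_avg (SS R l) (\<lambda>F. real (lgap (insert 1 (insert eta (\<tau> ` F)))))"
    by (intro mult_left_mono) auto
  also have "\<dots> = uniform_avg (SS R l) (\<lambda>F. real Lam * real (lgap (insert 1 (insert eta (\<tau> ` F)))))"
    by (rule avg_cmult[symmetric])
  also have "\<dots> \<le> uniform_avg (SS R l) (\<lambda>F. real (lgap (insert 0 (insert N F))))"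
    by (rule avg_mono) (use lower_pt[OF _ e2] in \<open>auto simp: SS_def simp flip: of_nat_mult\<close>)
  finally show ?thesis unfolding R_noN .
qed

end

theorem proposition3p3:
  fixes N Lam eta lam S l :: nat
  assumes "Lam \<ge> 1" and "eta \<ge> 1" and "N = eta * Lam"
    and "lam \<in> {1..Lam}" and "S \<in> {1..N}"
    and "l \<le> card (drop_set Lam eta lam - {S})"
  shows "real Lam * g l (eta - 1) \<le> cond_exp_clg Lam eta lam S l
       \<and> cond_exp_clg Lam eta lam S l \<le> real Lam * g l (eta + 1)"
proof -
  obtain r where rL: "r < Lam" and eq: "cond_exp_clg Lam eta lam S l =
     uniform_avg (SS ({x\<in>{1..N}. x mod Lam = r} - {N}) l) (\<lambda>F. real (lgap (insert 0 (insert N F))))"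
    using cond_normal[OF assms(1-5)] by blast
  have nn: "0 \<le> cond_exp_clg Lam eta lam S l" unfolding eq by (rule avg_nonneg) simp
  show ?thesis
  proof (cases "r = 0")
    case True
    have c: "cond_exp_clg Lam eta lam S l = real Lam * g l eta"
      unfolding eq True by (rule case0[OF assms(1-3)])
    have up: "g l eta \<le> g l (eta + 1)" using g_mono[OF assms(2)] by simp
    have lo: "g l (eta - 1) \<le> g l eta"
    proof (cases "eta = 1")
      case True thus ?thesis using g_zero g_nonneg by simp
    next
      case False
      hence "eta - 1 \<ge> 1" using assms(2) by simp
      from g_mono[OF this] False assms(2) show ?thesis by simp
    qed
    show ?thesis unfolding c using up lo by (auto intro: mult_left_mono)
  next
    case False
    interpret c2 Lam eta N r using assms(1-3) False rL by unfold_locales auto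
    have R: "{x\<in>{1..N}. x mod Lam = r} = R" unfolding R_def ..
    have up: "cond_exp_clg Lam eta lam S l \<le> real Lam * g l (eta + 1)" unfolding eq R by (rule upper)
    have lo: "real Lam * g l (eta - 1) \<le> cond_exp_clg Lam eta lam S l"
    proof (cases "eta = 1")
      case True thus ?thesis using g_zero nn by simp
    next
      case False
      hence "eta \<ge> 2" using assms(2) by simp
      thus ?thesis unfolding eq R by (rule lower)
    qed
    show ?thesis using up lo by simp
  qed
qed

end
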